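(* Let $G$ be a connected graph, $c\in V(G)$, and run the scan procedure at $c$ (with any processing order). Let $e$ and $f$ be distinct edges incident to $c$. If at least one of the following holds: (a) $e$ and $f$ span a square that has a chord; (b) $e$ and $f$ span a square whose top vertex is not unique; (c) $e$ and $f$ span more than one square; then $(e,f)\in\beta_c^*$, the transitive closure of $\beta_c$.
   Context: All graphs are finite, simple, undirected; $N(x)$ is the open neighborhood of $x$. For distinct edges $e=vu$, $f=vw$ sharing the vertex $v$, a square spanned by $e$ and $f$ is a 4-cycle $vuxw$ with $x\ne v$ adjacent to both $u$ and $w$; $x$ is its top vertex. The square has a chord if $uw\in E$ or $vx\in E$. A top vertex $x$ is unique if $|N(x)\cap N(v)|=2$. Scan procedure at $c$: the vertices of $N(c)$ are called primal, and edges incident to $c$ primal edges. Maintain two sets $I$ (incidence list) and $A$ (absence list) of unordered pairs of primal edges, both initially empty, and for every non-primal vertex $w\ne c$ a record of at most two "recorded primal neighbors" (first and second), initially none. Process the neighbors $u$ of $c$ one by one in an arbitrary order, and for each such $u$ process its neighbors $w\neq c$ in an arbitrary order: (1) if $w\in N(c)$, add $\{cu,cw\}$ to $A$; (2) else, if $w$ has no recorded primal neighbor, record $u$ as its first primal neighbor; (3) else, if $w$ has exactly one recorded primal neighbor $v$, record $u$ as its second primal neighbor, and if $\{cu,cv\}\notin I$ add $\{cu,cv\}$ to $I$, otherwise add $\{cu,cv\}$ to $A$; (4) else ($w$ has recorded first and second primal neighbors $v_1,v_2$) add $\{cv_1,cv_2\},\{cv_1,cu\},\{cv_2,cu\}$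 to $A$ (the record is not changed). After the procedure, $\alpha_c$ is the symmetric relation on primal edges consisting of the pairs in $I$, $\beta_c$ the symmetric relation consisting of the pairs in $A$, and $\overline{\alpha}_c$ the set of pairs of primal edges not in $I$. *)

theory Defs
  imports Main
begin

definition sgraph :: "'a set \<Rightarrow> ('a \<Rightarrow> 'a \<Rightarrow> bool) \<Rightarrow> bool" where
  "sgraph V E \<longleftrightarrow> finite V \<and> (\<forall>x y. E x y \<longrightarrow> x \<in> V \<and> y \<in> V)
     \<and> (\<forall>x y. E x y \<longrightarrow> E y x) \<and> (\<forall>x. \<not> E x x)"

definition connected_graph :: "'a set \<Rightarrow> ('a \<Rightarrow> 'a \<Rightarrow> bool) \<Rightarrow> bool" where
  "connected_graph V E \<longleftrightarrow> (\<forall>x\<in>V. \<forall>y\<in>V. (x, y) \<in> {(a, b). E a b}\<^sup>*)"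

definition Nbr :: "('a \<Rightarrow> 'a \<Rightarrow> bool) \<Rightarrow> 'a \<Rightarrow> 'a set" where
  "Nbr E x = {y. E x y}"

definition square_top :: "('a \<Rightarrow> 'a \<Rightarrow> bool) \<Rightarrow> 'a \<Rightarrow> 'a \<Rightarrow> 'a \<Rightarrow> 'a \<Rightarrow> bool" where
  "square_top E v u w x \<longleftrightarrow> E v u \<and> E v w \<and> u \<noteq> w \<and> x \<noteq> v \<and> E x u \<and> E x w"

(* state of the scan: incidence list I, absence list A (sets of unordered pairs of
   primal edges, edges being 2-element vertex sets), and for each vertex the list of
   recorded primal neighbours (at most two, in recording order) *)
type_synonym 'a scan_state = "'a set set set \<times> 'a set set set \<times> ('a \<Rightarrow> 'a list)"

definition scan_step :: "('a \<Rightarrow> 'a \<Rightarrow> bool) \<Rightarrow> 'a \<Rightarrow> 'a \<Rightarrow> 'a scan_state \<Rightarrow> 'a \<Rightarrow> 'a scan_state" where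
  "scan_step E c u st w = (case st of (I, A, r) \<Rightarrow>
     if E c w then (I, insert {{c,u},{c,w}} A, r)
     else (case r w of
        [] \<Rightarrow> (I, A, r(w := [u]))
      | [v] \<Rightarrow> (if {{c,u},{c,v}} \<notin> I
                then (insert {{c,u},{c,v}} I, A, r(w := [v, u]))
                else (I, insert {{c,u},{c,v}} A, r(w := [v, u])))
      | v1 # v2 # _ \<Rightarrow> (I, A \<union> {{{c,v1},{c,v2}}, {{c,v1},{c,u}}, {{c,v2},{c,u}}}, r)))"

definition scan :: "('a \<Rightarrow> 'a \<Rightarrow> bool) \<Rightarrow> 'a \<Rightarrow> 'a list \<Rightarrow> ('a \<Rightarrow> 'a list) \<Rightarrow> 'a scan_state" where
  "scan E c us ord = foldl (\<lambda>st u. foldl (scan_step E c u) st (ord u)) ({}, {}, (\<lambda>_. [])) us"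

definition valid_order :: "('a \<Rightarrow> 'a \<Rightarrow> bool) \<Rightarrow> 'a \<Rightarrow> 'a list \<Rightarrow> ('a \<Rightarrow> 'a list) \<Rightarrow> bool" where
  "valid_order E c us ord \<longleftrightarrow> distinct us \<and> set us = Nbr E c
     \<and> (\<forall>u \<in> Nbr E c. distinct (ord u) \<and> set (ord u) = Nbr E u - {c})"

definition beta :: "('a \<Rightarrow> 'a \<Rightarrow> bool) \<Rightarrow> 'a \<Rightarrow> 'a list \<Rightarrow> ('a \<Rightarrow> 'a list) \<Rightarrow> ('a set \<times> 'a set) set" where
  "beta E c us ord = {(e, f). {e, f} \<in> fst (snd (scan E c us ord))}"

end

theory Submission imports Defs begin

definition stepP :: "('a \<Rightarrow> 'a \<Rightarrow> bool) \<Rightarrow> 'a \<Rightarrow> 'a scan_state \<Rightarrow> 'a \<times> 'a \<Rightarrow> 'a scan_state" where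
  "stepP E c st q = (case q of (a,w) \<Rightarrow> scan_step E c a st w)"
definition FF :: "('a \<Rightarrow> 'a \<Rightarrow> bool) \<Rightarrow> 'a \<Rightarrow> ('a \<times> 'a) list \<Rightarrow> 'a scan_state" where
  "FF E c p = foldl (stepP E c) ({},{},(\<lambda>_. [])) p"
definition zs :: "('a \<times> 'a) list \<Rightarrow> 'a \<Rightarrow> 'a list" where
  "zs p x = map fst (filter (\<lambda>q. snd q = x) p)"

lemma FF_Nil[simp]: "FF E c [] = ({},{},(\<lambda>_. []))" by (simp add: FF_def)
lemma FF_snoc[simp]: "FF E c (p@[(a,w)]) = scan_step E c a (FF E c p) w"
  by (simp add: FF_def stepP_def)
lemma zs_Nil[simp]: "zs [] x = []" by (simp add: zs_def)
lemma zs_snoc[simp]: "zs (p@[(a,w)]) x = zs p x @ (if w = x then [a] else [])"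
  by (simp add: zs_def)

lemma step_mono: "scan_step E c a (I,A,r) w = (I',A',r') \<Longrightarrow> I \<subseteq> I' \<and> A \<subseteq> A'"
  by (auto simp: scan_step_def split: if_splits list.splits)

lemma r_inv: "\<not> E c x \<Longrightarrow> snd (snd (FF E c p)) x = take 2 (zs p x)"
proof (induction p rule: rev_induct)
  case Nil then show ?case by simp
next
  case (snoc q p)
  obtain a w where q: "q = (a,w)" by (cases q)
  obtain I A r where st: "FF E c p = (I,A,r)" by (cases "FF E c p")
  from snoc st have ih: "r x = take 2 (zs p x)" by simp
  show ?case
  proof (cases "w = x")
    case False then show ?thesis using ih q st
      by (auto simp: scan_step_def split: list.splits)
  next
    case True
    show ?thesis
    proof (cases "zs p x")
      case Nil then show ?thesis using ih q st True snoc.prems by (auto simp: scan_step_def)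
    next
      case (Cons v t) note C = this
      show ?thesis
      proof (cases t)
        case Nil then show ?thesis using ih q st True C snoc.prems by (auto simp: scan_step_def)
      next
        case (Cons v2 t2) then show ?thesis using ih q st True C snoc.prems by (auto simp: scan_step_def)
      qed
    qed
  qed
qed

lemma mono_snoc: "fst (FF E c p) \<subseteq> fst (FF E c (p@[(a,w)])) \<and> fst (snd (FF E c p)) \<subseteq> fst (snd (FF E c (p@[(a,w)])))"
  using step_mono[of E c a "fst (FF E c p)" "fst (snd (FF E c p))" "snd (snd (FF E c p))" w]
  by (cases "scan_step E c a (FF E c p) w") auto

lemma chord_inv: "(a,b) \<in> set p \<Longrightarrow> E c b \<Longrightarrow> {{c,a},{c,b}} \<in> fst (snd (FF E c p))"
proof (induction p rule: rev_induct)
  case Nil then show ?case by simp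
next
  case (snoc q p)
  obtain a' w where q: "q = (a',w)" by (cases q)
  show ?case
  proof (cases "(a,b) \<in> set p")
    case True then show ?thesis using snoc mono_snoc[of E c p a' w] q by auto
  next
    case False then have "a' = a" "w = b" using snoc q by auto
    then show ?thesis using snoc q by (cases "FF E c p") (auto simp: scan_step_def)
  qed
qed

lemma I_inv: "\<not> E c x \<Longrightarrow> 2 \<le> length (zs p x) \<Longrightarrow> {{c,zs p x!0},{c,zs p x!1}} \<in> fst (FF E c p)"
proof (induction p rule: rev_induct)
  case Nil then show ?case by simp
next
  case (snoc q p)
  obtain a w where q: "q = (a,w)" by (cases q)
  obtain I A r where st: "FF E c p = (I,A,r)" by (cases "FF E c p")
  have rx: "r x = take 2 (zs p x)" using r_inv[of E c x p] snoc.prems(1) st by simp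
  show ?case
  proof (cases "w = x \<and> length (zs p x) = 1")
    case False
    then have l2: "2 \<le> length (zs p x)" using snoc.prems q by (auto split: if_splits)
    then have "2 \<le> length (zs p x)" "zs (p@[q]) x ! 0 = zs p x ! 0" "zs (p@[q]) x ! 1 = zs p x ! 1"
      using snoc.prems q by (auto simp: nth_append)
    then show ?thesis using snoc mono_snoc[of E c p a w] q by auto
  next
    case True
    then obtain v where zv: "zs p x = [v]" by (cases "zs p x") auto
    then show ?thesis using True rx st q snoc.prems by (auto simp: scan_step_def insert_commute)
  qed
qed

lemma B_inv: "\<not> E c x \<Longrightarrow> 3 \<le> length (zs p x) \<Longrightarrow> y \<in> set (zs p x) \<Longrightarrow>
   y = hd (zs p x) \<or> {{c,hd (zs p x)},{c,y}} \<in> fst (snd (FF E c p))"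
proof (induction p rule: rev_induct)
  case Nil then show ?case by simp
next
  case (snoc q p)
  obtain a w where q: "q = (a,w)" by (cases q)
  obtain I A r where st: "FF E c p = (I,A,r)" by (cases "FF E c p")
  have rx: "r x = take 2 (zs p x)" using r_inv[of E c x p] snoc.prems(1) st by simp
  show ?case
  proof (cases "w = x")
    case False
    then show ?thesis using snoc mono_snoc[of E c p a w] q by auto
  next
    case True
    then have len: "2 \<le> length (zs p x)" using snoc.prems q by auto
    then obtain v1 v2 t where zv: "zs p x = v1 # v2 # t" 
      by (metis Suc_le_length_iff numeral_2_eq_2)
    have A': "fst (snd (FF E c (p@[q]))) = A \<union> {{{c,v1},{c,v2}}, {{c,v1},{c,a}}, {{c,v2},{c,a}}}"
      using zv rx st q True snoc.prems by (auto simp: scan_step_def)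
    have hd: "hd (zs (p@[q]) x) = v1" using zv q True by simp
    show ?thesis
    proof (cases "y = a \<or> y = v1 \<or> y = v2")
      case True then show ?thesis using A' hd by auto
    next
      case False
      then have yin: "y \<in> set (zs p x)" using snoc.prems q zv True by auto
      then have l3: "3 \<le> length (zs p x)" using zv False by (cases t) auto
      have ih: "y = v1 \<or> {{c,v1},{c,y}} \<in> A" using snoc.IH[OF snoc.prems(1) l3 yin] zv st by simp
      show ?thesis using A' hd ih by blast
    qed
  qed
qed

lemma pair_eq: "{a,b} = {a',b'} \<Longrightarrow> {{c,a},{c,b}} = {{c,a'},{c,b'}}"
  by (auto simp: doubleton_eq_iff)

lemma C_inv: "x1 \<noteq> x2 \<Longrightarrow> \<not> E c x1 \<Longrightarrow> \<not> E c x2 \<Longrightarrow> 2 \<le> length (zs p x1) \<Longrightarrow> 2 \<le> length (zs p x2)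
  \<Longrightarrow> {zs p x1!0, zs p x1!1} = {zs p x2!0, zs p x2!1} \<Longrightarrow> {{c,zs p x1!0},{c,zs p x1!1}} \<in> fst (snd (FF E c p))"
proof (induction p arbitrary: x1 x2 rule: rev_induct)
  case Nil then show ?case by simp
next
  case (snoc q p)
  obtain a w where q: "q = (a,w)" by (cases q)
  obtain I A r where st: "FF E c p = (I,A,r)" by (cases "FF E c p")
  have key: "{{c,zs (p@[q]) y1!0},{c,zs (p@[q]) y1!1}} \<in> fst (snd (FF E c (p@[q])))"
    if "y1 \<noteq> y2" "\<not> E c y1" "\<not> E c y2" "2 \<le> length (zs (p@[q]) y1)" "2 \<le> length (zs (p@[q]) y2)"
     "{zs (p@[q]) y1!0, zs (p@[q]) y1!1} = {zs (p@[q]) y2!0, zs (p@[q]) y2!1}"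
     "w \<noteq> y2" for y1 y2
  proof (cases "w = y1 \<and> length (zs p y1) = 1")
    case False
    then have l1: "2 \<le> length (zs p y1)" using that q by (auto split: if_splits)
    then have "2 \<le> length (zs p y1)" "zs (p@[q]) y1 ! 0 = zs p y1 ! 0" "zs (p@[q]) y1 ! 1 = zs p y1 ! 1"
      "2 \<le> length (zs p y2)" "zs (p@[q]) y2 ! 0 = zs p y2 ! 0" "zs (p@[q]) y2 ! 1 = zs p y2 ! 1"
      using that q by (auto simp: nth_append)
    then show ?thesis using snoc.IH[of y1 y2] l1 that mono_snoc[of E c p a w] q by auto
  next
    case True
    then obtain v where zv: "zs p y1 = [v]" by (cases "zs p y1") auto
    have rx: "r y1 = [v]" using r_inv[of E c y1 p] that(2) st zv by simp
    have z2: "2 \<le> length (zs p y2)" "zs (p@[q]) y2 = zs p y2" using that q by auto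
    have z1: "zs (p@[q]) y1 = [v,a]" using zv True q by simp
    have "{{c,zs p y2!0},{c,zs p y2!1}} \<in> I" using I_inv[of E c y2 p] that(3) z2(1) st by simp
    moreover have "{{c,zs p y2!0},{c,zs p y2!1}} = {{c,a},{c,v}}"
      using pair_eq[OF that(6)[symmetric]] z1 z2 by (simp add: insert_commute)
    ultimately show ?thesis using rx st q True z1 that by (auto simp: scan_step_def insert_commute)
  qed
  show ?case
  proof (cases "w = x2")
    case False then show ?thesis using key snoc.prems by blast
  next
    case True
    then have "w \<noteq> x1" using snoc.prems by auto
    then have "{{c,zs (p@[q]) x2!0},{c,zs (p@[q]) x2!1}} \<in> fst (snd (FF E c (p@[q])))"
      using key[of x2 x1] snoc.prems by auto
    then show ?thesis using pair_eq[OF snoc.prems(6)] by simp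
  qed
qed

definition LL :: "'a list \<Rightarrow> ('a \<Rightarrow> 'a list) \<Rightarrow> ('a \<times> 'a) list" where
  "LL us ord = concat (map (\<lambda>u. map (Pair u) (ord u)) us)"

lemma fold_eq: "foldl (\<lambda>st u. foldl (scan_step E c u) st (ord u)) s us
   = foldl (stepP E c) s (concat (map (\<lambda>u. map (Pair u) (ord u)) us))"
  by (induction us arbitrary: s) (auto simp: foldl_map stepP_def)

lemma scan_eq: "scan E c us ord = FF E c (LL us ord)"
  by (simp add: scan_def FF_def LL_def fold_eq)

lemma set_LL: "(a,b) \<in> set (LL us ord) \<longleftrightarrow> a \<in> set us \<and> b \<in> set (ord a)"
  by (auto simp: LL_def)

lemma set_zs_LL: "set (zs (LL us ord) x) = {a \<in> set us. x \<in> set (ord a)}"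
  by (force simp: zs_def LL_def)

lemma distinct_LL: "distinct us \<Longrightarrow> (\<forall>u\<in>set us. distinct (ord u)) \<Longrightarrow> distinct (LL us ord)"
  by (induction us) (auto simp: LL_def distinct_map inj_on_def)

lemma distinct_zs: "distinct p \<Longrightarrow> distinct (zs p x)"
  by (auto simp: zs_def distinct_map inj_on_def prod_eq_iff)

theorem mainTheorem4:
  fixes V :: "'a set" and E :: "'a \<Rightarrow> 'a \<Rightarrow> bool" and c u w :: 'a
    and us :: "'a list" and ord :: "'a \<Rightarrow> 'a list"
  assumes "sgraph V E" and "connected_graph V E" and "c \<in> V"
    and "valid_order E c us ord"
    and "E c u" and "E c w" and "u \<noteq> w"
    and "(\<exists>x. square_top E c u w x \<and> (E u w \<or> E c x))
         \<or> (\<exists>x. square_top E c u w x \<and> card (Nbr E x \<inter> Nbr E c) \<noteq> 2)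
         \<or> card {x. square_top E c u w x} > 1"
  shows "({c,u}, {c,w}) \<in> (beta E c us ord)\<^sup>*"
proof -
  note G = assms(1)[unfolded sgraph_def]
  note VO = assms(4)[unfolded valid_order_def Nbr_def]
  define L where "L = LL us ord"
  define A where "A = fst (snd (FF E c L))"
  have bet: "beta E c us ord = {(e, f). {e, f} \<in> A}"
    by (simp add: beta_def A_def L_def scan_eq)
  have symE: "E a b \<Longrightarrow> E b a" for a b using G by blast
  have irr: "\<not> E a a" for a using G by blast
  have inL: "(a,b) \<in> set L" if "E c a" "E a b" "b \<noteq> c" for a b
    using VO that by (auto simp: L_def set_LL)
  have distL: "distinct L" using VO by (auto simp: L_def intro!: distinct_LL)
  have setzs: "set (zs L x) = Nbr E x \<inter> Nbr E c" if "x \<noteq> c" for x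
    using VO that symE by (auto simp: L_def set_zs_LL Nbr_def)
  have finN: "finite (Nbr E x \<inter> Nbr E c)" for x
    using G by (auto simp: Nbr_def intro: finite_subset[of _ V])
  have betI: "{e,f} \<in> A \<Longrightarrow> (e,f) \<in> beta E c us ord" for e f by (simp add: bet)
  have betS: "{e,f} \<in> A \<Longrightarrow> (f,e) \<in> beta E c us ord" for e f by (simp add: bet insert_commute)
  have caseA1: ?thesis if "E u w"
  proof -
    have "w \<noteq> c" using assms(6) irr by blast
    then have "(u,w) \<in> set L" using inL assms(5) that by blast
    then have "{{c,u},{c,w}} \<in> A" using chord_inv[of u w L E c] assms(6) A_def by simp
    then show ?thesis using betI by blast
  qed
  have caseA2: ?thesis if "square_top E c u w x" "E c x" for x
  proof -
    have x: "E u x" "E w x" "x \<noteq> c" using that symE by (auto simp: square_top_def)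
    have "{{c,u},{c,x}} \<in> A" using chord_inv[of u x L E c] inL[OF assms(5) x(1) x(3)] that(2) A_def by simp
    moreover have "{{c,w},{c,x}} \<in> A" using chord_inv[of w x L E c] inL[OF assms(6) x(2) x(3)] that(2) A_def by simp
    ultimately show ?thesis using betI betS by (meson converse_rtrancl_into_rtrancl r_into_rtrancl)
  qed
  have caseB: ?thesis if "square_top E c u w x" "card (Nbr E x \<inter> Nbr E c) \<noteq> 2" for x
  proof (cases "E c x")
    case True then show ?thesis using caseA2 that by blast
  next
    case False
    have x: "E x u" "E x w" "x \<noteq> c" using that by (auto simp: square_top_def)
    have sub: "{u,w} \<subseteq> set (zs L x)" using setzs[OF x(3)] x assms(5,6) by (auto simp: Nbr_def)
    have "2 \<le> card (set (zs L x))" using card_mono[OF _ sub] assms(7) by (simp add: List.finite_set)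
    moreover have "card (set (zs L x)) \<noteq> 2" using setzs[OF x(3)] that(2) by simp
    ultimately have l3: "3 \<le> length (zs L x)" using card_length[of "zs L x"] by linarith
    have hu: "u = hd (zs L x) \<or> {{c,hd (zs L x)},{c,u}} \<in> A"
      using B_inv[of E c x L] False l3 sub A_def by auto
    have hw: "w = hd (zs L x) \<or> {{c,hd (zs L x)},{c,w}} \<in> A"
      using B_inv[of E c x L] False l3 sub A_def by auto
    from hu hw show ?thesis using betI betS
      by (metis converse_rtrancl_into_rtrancl r_into_rtrancl rtrancl.rtrancl_refl)
  qed
  have caseC: ?thesis if "card {x. square_top E c u w x} > 1"
  proof -
    let ?S = "{x. square_top E c u w x}"
    have "?S \<noteq> {}" "finite ?S" using that card_gt_0_iff[of ?S] by auto
    then obtain x1 where x1: "x1 \<in> ?S" by blast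
    have "card (?S - {x1}) > 0" using that x1 \<open>finite ?S\<close> by simp
    then obtain x2 where x2: "x2 \<in> ?S" "x2 \<noteq> x1" using card_gt_0_iff[of "?S - {x1}"] by blast
    have sq1: "square_top E c u w x1" and sq2: "square_top E c u w x2" using x1 x2 by auto
    show ?thesis
    proof (cases "E c x1 \<or> E c x2 \<or> card (Nbr E x1 \<inter> Nbr E c) \<noteq> 2 \<or> card (Nbr E x2 \<inter> Nbr E c) \<noteq> 2")
      case True then show ?thesis using caseA2 caseB sq1 sq2 by blast
    next
      case False
      have zz: "length (zs L y) = 2 \<and> {zs L y ! 0, zs L y ! 1} = {u,w}"
        if "square_top E c u w y" "card (Nbr E y \<inter> Nbr E c) = 2" for y
      proof -
        have y: "E y u" "E y w" "y \<noteq> c" using that by (auto simp: square_top_def)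
        have sub: "{u,w} \<subseteq> set (zs L y)" using setzs[OF y(3)] y assms(5,6) by (auto simp: Nbr_def)
        have "set (zs L y) = {u,w}"
          using card_subset_eq[OF List.finite_set sub] setzs[OF y(3)] that(2) assms(7) by simp
        moreover have "distinct (zs L y)" using distinct_zs[OF distL] .
        ultimately have l: "length (zs L y) = 2" using distinct_card[of "zs L y"] assms(7) by simp
        then obtain a b where "zs L y = [a,b]"
          by (metis (no_types, lifting) One_nat_def Suc_1 length_0_conv length_Suc_conv)
        then show ?thesis using l \<open>set (zs L y) = {u,w}\<close> by simp
      qed
      have z1: "length (zs L x1) = 2" "{zs L x1 ! 0, zs L x1 ! 1} = {u,w}" using zz sq1 False by auto
      have z2: "length (zs L x2) = 2" "{zs L x2 ! 0, zs L x2 ! 1} = {u,w}" using zz sq2 False by auto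
      have "{{c,zs L x1!0},{c,zs L x1!1}} \<in> A"
        using C_inv[of x1 x2 E c L] x2(2) False z1 z2 A_def by auto
      then have "{{c,u},{c,w}} \<in> A" using pair_eq[OF z1(2)] by simp
      then show ?thesis using betI by blast
    qed
  qed
  show ?thesis using assms(8) caseA1 caseA2 caseB caseC by blast
qed

end
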